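(* Under the hypotheses of Proposition 2.1 (both singular and invertible components, $P$ primitive), the Markov operator $\mathcal{Q}$ is uniformly ergodic: there exist constants $C<\infty$ and $a>0$ such that for every $\mathcal{Q}$-stationary probability measure $\eta$, every $n\in\mathbb{N}$ and every $\varphi\in L^\infty(\mathscr{A}\times\mathbb{P}^1)$, $$\Big\|\mathcal{Q}^n\varphi-\int\varphi\,d\eta\Big\|_\infty\le C e^{-an}\|\varphi\|_\infty.$$
   Context: $\mathscr{A}=\{1,\dots,k\}=\mathscr{A}_{\mathrm{sing}}\sqcup\mathscr{A}_{\mathrm{inv}}$, both nonempty; $\underline A=(A_i)$ with $\mathrm{rank}A_i=1$ on $\mathscr{A}_{\mathrm{sing}}$ and $\mathrm{rank}A_i=2$ on $\mathscr{A}_{\mathrm{inv}}$. $P=(p_{ij})$ primitive left stochastic ($p_{ij}$ = probability of $j\to i$) with stationary vector $q$. Projective action: $\hat A\hat v=\widehat{Av}$ for invertible $A$, and for rank one $A$ the constant map to $\hat r$, $r=\mathrm{Range}(A)$. $L^\infty(\mathscr{A}\times\mathbb{P}^1)$: bounded measurable functions with sup norm. $(\mathcal{Q}\varphi)(j,\hat v)=\sum_i\varphi(i,\hat A_i\hat v)p_{ij}$; $\eta$ is $\mathcal{Q}$-stationary if $\int\mathcal{Q}\varphi\,d\eta=\int\varphi\,d\eta$ for all such $\varphi$. *)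

theory Defs
  imports "HOL-Analysis.Analysis" "HOL-Probability.Probability"
begin

text \<open>The projective line P^1 (lines through 0 in R^2) is parametrised by the angle
  theta in [0,pi): theta corresponds to the line spanned by (cos theta, sin theta).\<close>

definition P1 :: "real set" where
  "P1 = {0..<pi}"

definition dirv :: "real \<Rightarrow> real^2" where
  "dirv \<theta> = vector [cos \<theta>, sin \<theta>]"

definition line_of :: "real^2 \<Rightarrow> real" where
  "line_of w = (THE \<theta>. \<theta> \<in> P1 \<and> (\<exists>c. c \<noteq> 0 \<and> w = c *\<^sub>R dirv \<theta>))"

definition proj_act :: "real^2^2 \<Rightarrow> real \<Rightarrow> real" where
  "proj_act A \<theta> =
     (if rank A = 1 then line_of (SOME r. r \<noteq> 0 \<and> r \<in> range (\<lambda>x. A *v x))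
      else line_of (A *v dirv \<theta>))"

definition SP :: "nat \<Rightarrow> (nat \<times> real) measure" where
  "SP k = count_space {1..k} \<Otimes>\<^sub>M restrict_space borel P1"

definition Linf :: "nat \<Rightarrow> (nat \<times> real \<Rightarrow> real) set" where
  "Linf k = {\<phi>. \<phi> \<in> borel_measurable (SP k) \<and> bounded (\<phi> ` ({1..k} \<times> P1))}"

definition supnorm :: "nat \<Rightarrow> (nat \<times> real \<Rightarrow> real) \<Rightarrow> real" where
  "supnorm k \<phi> = (SUP x\<in>{1..k} \<times> P1. \<bar>\<phi> x\<bar>)"

text \<open>p i j = probability of j -> i (left stochastic).\<close>
definition left_stochastic :: "nat \<Rightarrow> (nat \<Rightarrow> nat \<Rightarrow> real) \<Rightarrow> bool" where
  "left_stochastic k p \<longleftrightarrow>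
     (\<forall>i\<in>{1..k}. \<forall>j\<in>{1..k}. p i j \<ge> 0) \<and> (\<forall>j\<in>{1..k}. (\<Sum>i\<in>{1..k}. p i j) = 1)"

fun mpow :: "nat \<Rightarrow> (nat \<Rightarrow> nat \<Rightarrow> real) \<Rightarrow> nat \<Rightarrow> nat \<Rightarrow> nat \<Rightarrow> real" where
  "mpow k p 0 i j = (if i = j then 1 else 0)"
| "mpow k p (Suc n) i j = (\<Sum>l\<in>{1..k}. p i l * mpow k p n l j)"

definition primitive :: "nat \<Rightarrow> (nat \<Rightarrow> nat \<Rightarrow> real) \<Rightarrow> bool" where
  "primitive k p \<longleftrightarrow> (\<exists>N. \<forall>i\<in>{1..k}. \<forall>j\<in>{1..k}. mpow k p N i j > 0)"

definition Qop :: "nat \<Rightarrow> (nat \<Rightarrow> real^2^2) \<Rightarrow> (nat \<Rightarrow> nat \<Rightarrow> real)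
    \<Rightarrow> (nat \<times> real \<Rightarrow> real) \<Rightarrow> (nat \<times> real \<Rightarrow> real)" where
  "Qop k A p \<phi> = (\<lambda>(j, \<theta>). \<Sum>i\<in>{1..k}. \<phi> (i, proj_act (A i) \<theta>) * p i j)"

definition Q_stationary :: "nat \<Rightarrow> (nat \<Rightarrow> real^2^2) \<Rightarrow> (nat \<Rightarrow> nat \<Rightarrow> real)
    \<Rightarrow> (nat \<times> real) measure \<Rightarrow> bool" where
  "Q_stationary k A p \<eta> \<longleftrightarrow> prob_space \<eta> \<and> sets \<eta> = sets (SP k) \<and>
     (\<forall>\<phi>\<in>Linf k. (\<integral>x. Qop k A p \<phi> x \<partial>\<eta>) = (\<integral>x. \<phi> x \<partial>\<eta>))"

end

theory Submission
  imports Defs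
begin


definition Fang :: "real^2 \<Rightarrow> real" where
  "Fang w = (if w$2 > 0 then arccos (w$1 / sqrt ((w$1)\<^sup>2 + (w$2)\<^sup>2))
     else if w$2 < 0 then arccos (- (w$1) / sqrt ((w$1)\<^sup>2 + (w$2)\<^sup>2)) else 0)"

lemma dirv_comp [simp]: "dirv t $ 1 = cos t" "dirv t $ 2 = sin t"
  by (simp_all add: dirv_def)

lemma dirv_nz: "dirv t \<noteq> 0"
proof
  assume "dirv t = 0"
  then have "cos t = 0" "sin t = 0" using dirv_comp[of t] by auto
  then show False using sin_cos_squared_add[of t] by simp
qed

lemma line_uniq:
  assumes "t \<in> P1" "t' \<in> P1" "c \<noteq> 0" "c' \<noteq> 0" "c *\<^sub>R dirv t = c' *\<^sub>R dirv t'"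
  shows "t = t'"
proof -
  have e1: "c * cos t = c' * cos t'" and e2: "c * sin t = c' * sin t'"
    using arg_cong[OF assms(5), of "\<lambda>v. v$1"] arg_cong[OF assms(5), of "\<lambda>v. v$2"] by auto
  have "c * c' * sin (t - t') = (c * sin t) * (c' * cos t') - (c * cos t) * (c' * sin t')"
    by (simp add: sin_diff algebra_simps)
  also have "\<dots> = 0" using e1 e2 by (simp add: algebra_simps)
  finally have "sin (t - t') = 0" using assms(3,4) by simp
  then obtain i :: int where i: "t - t' = of_int i * pi" using sin_zero_iff_int2 by blast
  have "\<bar>t - t'\<bar> < pi" using assms(1,2) by (auto simp: P1_def)
  then have "\<bar>of_int i\<bar> * pi < 1 * pi" using i by (simp add: abs_mult)
  then have "\<bar>of_int i :: real\<bar> < 1" using pi_gt_zero mult_less_cancel_right_pos by blast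
  then have "i = 0" by linarith
  then show ?thesis using i by simp
qed

lemma aux1:
  fixes a b n :: real assumes "n > 0" "n\<^sup>2 = a\<^sup>2 + b\<^sup>2"
  shows "1 - (a/n)\<^sup>2 = (b/n)\<^sup>2"
proof -
  have "b\<^sup>2 = n\<^sup>2 - a\<^sup>2" using assms(2) by simp
  then have "(b/n)\<^sup>2 = (n\<^sup>2 - a\<^sup>2) / n\<^sup>2" by (simp add: power_divide)
  also have "\<dots> = 1 - (a/n)\<^sup>2" using assms(1) by (simp add: diff_divide_distrib power_divide)
  finally show ?thesis by simp
qed

lemma Fang_prop:
  assumes "w \<noteq> 0"
  shows "Fang w \<in> P1 \<and> (\<exists>c. c \<noteq> 0 \<and> w = c *\<^sub>R dirv (Fang w))"
proof -
  define n where "n = sqrt ((w$1)\<^sup>2 + (w$2)\<^sup>2)"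
  have wz: "w$1 \<noteq> 0 \<or> w$2 \<noteq> 0" using assms by (auto simp: vec_eq_iff forall_2)
  then have npos: "n > 0" unfolding n_def by (auto intro: add_pos_nonneg add_nonneg_pos)
  have nsq: "n\<^sup>2 = (w$1)\<^sup>2 + (w$2)\<^sup>2" unfolding n_def by simp
  have b1: "\<bar>w$1\<bar> \<le> n" unfolding n_def by (rule real_le_rsqrt) simp
  show ?thesis
  proof (cases "w$2 > 0")
    case True
    define x where "x = w$1 / n"
    have F: "Fang w = arccos x" using True by (simp add: Fang_def x_def n_def)
    have xb: "-1 \<le> x" "x \<le> 1" using b1 npos by (auto simp: x_def divide_simps abs_le_iff)
    have "x \<noteq> -1"
    proof
      assume "x = -1" then have "w$1 = - n" using npos by (simp add: x_def field_simps)
      then have "(w$2)\<^sup>2 = 0" using nsq by simp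
      then show False using True by simp
    qed
    then have xb': "-1 < x" using xb by simp
    have s: "sin (arccos x) = w$2 / n"
    proof -
      have "sin (arccos x) = sqrt (1 - x\<^sup>2)" by (simp add: sin_arccos xb)
      also have "1 - x\<^sup>2 = (w$2 / n)\<^sup>2" using aux1[OF npos nsq] by (simp add: x_def)
      also have "sqrt \<dots> = w$2 / n" using True npos by simp
      finally show ?thesis .
    qed
    have c: "cos (arccos x) = x" using xb by (simp add: cos_arccos)
    have w1: "w$1 = n * x" using npos by (simp add: x_def)
    have "w = n *\<^sub>R dirv (Fang w)"
      unfolding vec_eq_iff forall_2 using s npos c w1 by (simp add: F)
    moreover have "Fang w \<in> P1"
    proof -
      have np: "arccos x \<noteq> pi" using c \<open>x \<noteq> -1\<close> by auto
      then show ?thesis using F arccos_lbound[OF xb] arccos_ubound[OF xb] by (auto simp: P1_def)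
    qed
    moreover have "n \<noteq> 0" "- n \<noteq> 0" using npos by auto
    ultimately show ?thesis by blast
  next
    case False
    show ?thesis
    proof (cases "w$2 < 0")
      case True
      define x where "x = - w$1 / n"
      have F: "Fang w = arccos x" using True by (simp add: Fang_def x_def n_def)
      have xb: "-1 \<le> x" "x \<le> 1" using b1 npos by (auto simp: x_def divide_simps abs_le_iff)
      have "x \<noteq> -1"
      proof
        assume "x = -1" then have "w$1 = n" using npos by (simp add: x_def field_simps)
        then have "(w$2)\<^sup>2 = 0" using nsq by simp
        then show False using True by simp
      qed
      then have xb': "-1 < x" using xb by simp
      have s: "sin (arccos x) = - w$2 / n"
      proof -
        have "sin (arccos x) = sqrt (1 - x\<^sup>2)" by (simp add: sin_arccos xb)
        also have "1 - x\<^sup>2 = (- w$2 / n)\<^sup>2" using aux1[OF npos nsq] by (simp add: x_def power_divide)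
        also have "sqrt \<dots> = - w$2 / n"
        proof -
          have pos2: "0 < - w$2 / n" using True npos by (simp add: divide_neg_pos)
          then show ?thesis by (metis real_sqrt_abs abs_of_pos)
        qed
        finally show ?thesis .
      qed
      have c: "cos (arccos x) = x" using xb by (simp add: cos_arccos)
      have w1: "w$1 = - n * x" using npos by (simp add: x_def)
      have "w = (- n) *\<^sub>R dirv (Fang w)"
        unfolding vec_eq_iff forall_2 using s npos c w1 by (simp add: F)
      moreover have "Fang w \<in> P1"
      proof -
        have np: "arccos x \<noteq> pi" using c \<open>x \<noteq> -1\<close> by auto
        then show ?thesis using F arccos_lbound[OF xb] arccos_ubound[OF xb] by (auto simp: P1_def)
      qed
      moreover have "n \<noteq> 0" "- n \<noteq> 0" using npos by auto
    ultimately show ?thesis by blast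
    next
      case False2: False
      then have "w$2 = 0" using False by simp
      then have "w = (w$1) *\<^sub>R dirv (Fang w)" "w$1 \<noteq> 0"
        using wz by (auto simp: Fang_def vec_eq_iff forall_2)
      moreover have "Fang w \<in> P1" using \<open>w$2 = 0\<close> by (simp add: Fang_def P1_def)
      ultimately show ?thesis by blast
    qed
  qed
qed

lemma line_of_Fang: assumes "w \<noteq> 0" shows "line_of w = Fang w"
  unfolding line_of_def
proof (rule the_equality)
  show "Fang w \<in> P1 \<and> (\<exists>c. c \<noteq> 0 \<and> w = c *\<^sub>R dirv (Fang w))" using Fang_prop[OF assms] .
next
  fix t assume t: "t \<in> P1 \<and> (\<exists>c. c \<noteq> 0 \<and> w = c *\<^sub>R dirv t)"
  obtain c where c: "c \<noteq> 0" "w = c *\<^sub>R dirv t" using t by blast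
  obtain c' where c': "c' \<noteq> 0" "w = c' *\<^sub>R dirv (Fang w)" using Fang_prop[OF assms] by blast
  have FP: "Fang w \<in> P1" using Fang_prop[OF assms] by blast
  have eqc: "c *\<^sub>R dirv t = c' *\<^sub>R dirv (Fang w)" using c(2) c'(2) by metis
  have tP: "t \<in> P1" using t by blast
  show "t = Fang w" by (rule line_uniq[OF tP FP c(1) c'(1) eqc])
qed

lemma line_of_P1: "w \<noteq> 0 \<Longrightarrow> line_of w \<in> P1"
  by (simp add: line_of_Fang Fang_prop)



lemma abs_ratio_le: "\<bar>(a::real) / sqrt (a\<^sup>2 + b\<^sup>2)\<bar> \<le> 1"
proof -
  define r where "r = sqrt (a\<^sup>2 + b\<^sup>2)"
  have r0: "r \<ge> 0" unfolding r_def by simp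
  have le: "\<bar>a\<bar> \<le> r" unfolding r_def by (rule real_le_rsqrt) simp
  show ?thesis
  proof (cases "r = 0")
    case True
    then have z: "sqrt (a\<^sup>2 + b\<^sup>2) = 0" by (simp add: r_def)
    show ?thesis by (simp add: z)
  next
    case False
    then have pos: "r > 0" using r0 by linarith
    have "\<bar>a / r\<bar> = \<bar>a\<bar> / r" using pos by (rule abs_div_pos[symmetric])
    also have "\<dots> \<le> 1" using pos le by (subst divide_le_eq_1_pos) auto
    finally show ?thesis by (simp add: r_def)
  qed
qed

lemma abs_bounds: "\<bar>x::real\<bar> \<le> B \<Longrightarrow> -B \<le> x \<and> x \<le> B" by arith
lemma abs_diff_bound: "(a::real) \<le> x \<and> x \<le> a + d \<Longrightarrow> a \<le> y \<and> y \<le> a + d \<Longrightarrow> \<bar>x - y\<bar> \<le> d" by arith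

lemma abs_bounds2: "-B \<le> (x::real) \<and> x \<le> B \<Longrightarrow> \<bar>x\<bar> \<le> B" by arith

definition clampR :: "real \<Rightarrow> real" where "clampR x = max (-1) (min 1 x)"

lemma arccos_clampR_meas: "(\<lambda>x. arccos (clampR x)) \<in> borel_measurable borel"
proof (rule borel_measurable_continuous_onI)
  show "continuous_on UNIV (\<lambda>x. arccos (clampR x))"
    unfolding clampR_def by (intro continuous_intros) auto
qed

lemma arccos_clampR: "-1 \<le> x \<Longrightarrow> x \<le> 1 \<Longrightarrow> arccos (clampR x) = arccos x"
  by (simp add: clampR_def)

lemma mv2: "(B *v v) $ i = B$i$1 * v$1 + B$i$2 * v$2" for B :: "real^2^2"
  by (simp add: matrix_vector_mult_def sum_2)

lemma Fang_meas: "(\<lambda>t. Fang (B *v dirv t)) \<in> borel_measurable borel"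
proof -
  define a where "a t = B$1$1 * cos t + B$1$2 * sin t" for t
  define b where "b t = B$2$1 * cos t + B$2$2 * sin t" for t
  have am: "a \<in> borel_measurable borel" unfolding a_def
    by (intro borel_measurable_continuous_onI continuous_intros)
  have bm: "b \<in> borel_measurable borel" unfolding b_def
    by (intro borel_measurable_continuous_onI continuous_intros)
  have eq: "(\<lambda>t. Fang (B *v dirv t)) = (\<lambda>t. if b t > 0 then arccos (clampR (a t / sqrt ((a t)\<^sup>2 + (b t)\<^sup>2)))
     else if b t < 0 then arccos (clampR (- a t / sqrt ((a t)\<^sup>2 + (b t)\<^sup>2))) else 0)"
  proof
    fix t
    have h1: "a t / sqrt ((a t)\<^sup>2 + (b t)\<^sup>2) \<le> 1" by (rule abs_le_D1[OF abs_ratio_le])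
    have h2: "- (a t / sqrt ((a t)\<^sup>2 + (b t)\<^sup>2)) \<le> 1" by (rule abs_le_D2[OF abs_ratio_le])
    have h3: "- a t / sqrt ((a t)\<^sup>2 + (b t)\<^sup>2) = - (a t / sqrt ((a t)\<^sup>2 + (b t)\<^sup>2))" by simp
    have r1: "-1 \<le> a t / sqrt ((a t)\<^sup>2 + (b t)\<^sup>2) \<and> a t / sqrt ((a t)\<^sup>2 + (b t)\<^sup>2) \<le> 1"
      using h1 h2 by linarith
    have r2: "-1 \<le> - a t / sqrt ((a t)\<^sup>2 + (b t)\<^sup>2) \<and> - a t / sqrt ((a t)\<^sup>2 + (b t)\<^sup>2) \<le> 1"
      using h1 h2 unfolding h3 by linarith
    show "Fang (B *v dirv t) = (if b t > 0 then arccos (clampR (a t / sqrt ((a t)\<^sup>2 + (b t)\<^sup>2)))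
     else if b t < 0 then arccos (clampR (- a t / sqrt ((a t)\<^sup>2 + (b t)\<^sup>2))) else 0)"
    proof -
      have u1: "(B *v dirv t)$1 = a t" by (simp add: mv2 a_def)
      have u2: "(B *v dirv t)$2 = b t" by (simp add: mv2 b_def)
      show ?thesis unfolding Fang_def u1 u2 using r1 r2 by (simp add: arccos_clampR)
    qed
  qed
  have d: "(\<lambda>t. sqrt ((a t)\<^sup>2 + (b t)\<^sup>2)) \<in> borel_measurable borel"
    by (rule measurable_compose[OF _ borel_measurable_sqrt]) (intro borel_measurable_add borel_measurable_power am bm)
  have q1: "(\<lambda>t. a t / sqrt ((a t)\<^sup>2 + (b t)\<^sup>2)) \<in> borel_measurable borel"
    using am d by (rule borel_measurable_divide)
  have q2: "(\<lambda>t. - a t / sqrt ((a t)\<^sup>2 + (b t)\<^sup>2)) \<in> borel_measurable borel"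
    using am d by (intro borel_measurable_divide borel_measurable_uminus)
  have m1: "(\<lambda>t. arccos (clampR (a t / sqrt ((a t)\<^sup>2 + (b t)\<^sup>2)))) \<in> borel_measurable borel"
    by (rule measurable_compose[OF q1 arccos_clampR_meas])
  have m2: "(\<lambda>t. arccos (clampR (- a t / sqrt ((a t)\<^sup>2 + (b t)\<^sup>2)))) \<in> borel_measurable borel"
    by (rule measurable_compose[OF q2 arccos_clampR_meas])
  have s1: "{t \<in> space borel. b t > 0} \<in> sets borel" using bm by measurable
  have s2: "{t \<in> space borel. b t < 0} \<in> sets borel" using bm by measurable
  show ?thesis unfolding eq
    by (intro measurable_If m1 m2 s1 s2 measurable_const) simp
qed

lemma rank1_range: assumes "rank (B::real^2^2) = 1" shows "\<exists>r. r \<noteq> 0 \<and> r \<in> range (\<lambda>x. B *v x)"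
proof (rule ccontr)
  assume "\<not> ?thesis"
  then have "\<forall>x. B *v x = 0 *v x" by auto
  then have "B = 0" using matrix_eq by blast
  then show False using assms by simp
qed

lemma rank2_nz: assumes "rank (B::real^2^2) = 2" shows "B *v dirv t \<noteq> 0"
proof
  have "inj ((*v) B)" using full_rank_injective[of B] assms by simp
  moreover assume "B *v dirv t = 0"
  ultimately have "dirv t = 0" by (metis matrix_vector_mult_0_right injD)
  then show False using dirv_nz by blast
qed

lemma proj_act_P1: assumes "rank B = 1 \<or> rank B = 2" shows "proj_act B t \<in> P1"
proof (cases "rank B = 1")
  case True
  then have "(SOME r. r \<noteq> 0 \<and> r \<in> range (\<lambda>x. B *v x)) \<noteq> 0"
    using someI_ex[OF rank1_range[OF True]] by blast
  then show ?thesis using True by (simp add: proj_act_def line_of_P1)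
next
  case False
  then have "rank B = 2" using assms by simp
  then show ?thesis using False by (simp add: proj_act_def line_of_P1 rank2_nz)
qed

lemma proj_act_const: "rank B = 1 \<Longrightarrow> proj_act B t = proj_act B t'"
  by (simp add: proj_act_def)

lemma proj_act_meas: assumes "rank B = 1 \<or> rank B = 2"
  shows "proj_act B \<in> measurable (restrict_space borel P1) (restrict_space borel P1)"
proof (rule measurable_restrict_space2)
  show "proj_act B \<in> space (restrict_space borel P1) \<rightarrow> P1" using proj_act_P1[OF assms] by auto
  show "proj_act B \<in> measurable (restrict_space borel P1) borel"
  proof (rule measurable_restrict_space1)
    show "proj_act B \<in> borel_measurable borel"
    proof (cases "rank B = 1")
      case True
      then have "proj_act B = (\<lambda>t. proj_act B 0)" using proj_act_const by blast
      then show ?thesis by (metis measurable_const space_borel UNIV_I)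
    next
      case False
      then have r2: "rank B = 2" using assms by simp
      have "proj_act B = (\<lambda>t. Fang (B *v dirv t))"
        using False by (auto simp: fun_eq_iff proj_act_def line_of_Fang rank2_nz[OF r2])
      then show ?thesis using Fang_meas by simp
    qed
  qed
qed



lemma mpow_Suc':
  assumes "i \<in> {1..k}" "j \<in> {1..k}"
  shows "mpow k p (Suc n) i j = (\<Sum>l\<in>{1..k}. mpow k p n i l * p l j)"
  using assms
proof (induction n arbitrary: i j)
  case 0
  then show ?case by (simp add: if_distrib if_distribR sum.If_cases cong: if_cong)
next
  case (Suc n)
  have "mpow k p (Suc (Suc n)) i j = (\<Sum>l\<in>{1..k}. p i l * mpow k p (Suc n) l j)" by simp
  also have "\<dots> = (\<Sum>l\<in>{1..k}. p i l * (\<Sum>m\<in>{1..k}. mpow k p n l m * p m j))"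
    using Suc.IH Suc.prems by (intro sum.cong) auto
  also have "\<dots> = (\<Sum>m\<in>{1..k}. (\<Sum>l\<in>{1..k}. p i l * mpow k p n l m) * p m j)"
    by (simp add: sum_distrib_left sum_distrib_right mult.assoc) (rule sum.swap)
  also have "\<dots> = (\<Sum>m\<in>{1..k}. mpow k p (Suc n) i m * p m j)" by simp
  finally show ?case .
qed

locale QS =
  fixes k :: nat and A :: "nat \<Rightarrow> real^2^2" and p :: "nat \<Rightarrow> nat \<Rightarrow> real"
  assumes ranks: "\<forall>i\<in>{1..k}. rank (A i) = 1 \<or> rank (A i) = 2"
    and stoch: "left_stochastic k p"
begin

abbreviation "Q \<equiv> Qop k A p"
abbreviation "S \<equiv> {1..k} \<times> P1"

lemma pnn: "i \<in> {1..k} \<Longrightarrow> j \<in> {1..k} \<Longrightarrow> p i j \<ge> 0"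
  using stoch by (auto simp: left_stochastic_def)
lemma psum: "j \<in> {1..k} \<Longrightarrow> (\<Sum>i\<in>{1..k}. p i j) = 1"
  using stoch by (auto simp: left_stochastic_def)

lemma act_P1: "i \<in> {1..k} \<Longrightarrow> proj_act (A i) t \<in> P1"
  using ranks proj_act_P1 by blast

lemma Q_app: "Q f (j, t) = (\<Sum>i\<in>{1..k}. f (i, proj_act (A i) t) * p i j)"
  by (simp add: Qop_def)

lemma Q_range:
  assumes "\<forall>x\<in>S. m \<le> f x \<and> f x \<le> M" "x \<in> S"
  shows "m \<le> Q f x \<and> Q f x \<le> M"
proof -
  obtain j t where x: "x = (j, t)" "j \<in> {1..k}" "t \<in> P1" using assms(2) by auto
  have "m = (\<Sum>i\<in>{1..k}. m * p i j)" using psum[OF x(2)] by (simp add: sum_distrib_left[symmetric])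
  also have "\<dots> \<le> (\<Sum>i\<in>{1..k}. f (i, proj_act (A i) t) * p i j)"
    using assms(1) act_P1 pnn x(2) by (intro sum_mono mult_right_mono) auto
  finally have l: "m \<le> Q f x" using x by (simp add: Q_app)
  have "(\<Sum>i\<in>{1..k}. f (i, proj_act (A i) t) * p i j) \<le> (\<Sum>i\<in>{1..k}. M * p i j)"
    using assms(1) act_P1 pnn x(2) by (intro sum_mono mult_right_mono) auto
  also have "\<dots> = M" using psum[OF x(2)] by (simp add: sum_distrib_left[symmetric])
  finally have u: "Q f x \<le> M" using x by (simp add: Q_app)
  show ?thesis using l u by simp
qed

lemma Qpow_range:
  assumes "\<forall>x\<in>S. m \<le> f x \<and> f x \<le> M"
  shows "\<forall>x\<in>S. m \<le> (Q ^^ n) f x \<and> (Q ^^ n) f x \<le> M"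
proof (induction n)
  case 0 show ?case using assms by simp
next
  case (Suc n)
  show ?case
  proof
    fix x assume "x \<in> S"
    then show "m \<le> (Q ^^ Suc n) f x \<and> (Q ^^ Suc n) f x \<le> M" using Q_range[OF Suc.IH, of x] by simp
  qed
qed

lemma step:
  assumes "\<forall>i\<in>{1..k}. \<forall>t\<in>P1. (1 - c i) * m \<le> g (i, proj_act (A i) t) - c i * F
              \<and> g (i, proj_act (A i) t) - c i * F \<le> (1 - c i) * M"
    and "j \<in> {1..k}" "t \<in> P1"
  shows "(1 - (\<Sum>i\<in>{1..k}. c i * p i j)) * m \<le> Q g (j, t) - (\<Sum>i\<in>{1..k}. c i * p i j) * F
     \<and> Q g (j, t) - (\<Sum>i\<in>{1..k}. c i * p i j) * F \<le> (1 - (\<Sum>i\<in>{1..k}. c i * p i j)) * M"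
proof -
  have eq: "Q g (j, t) - (\<Sum>i\<in>{1..k}. c i * p i j) * F
      = (\<Sum>i\<in>{1..k}. (g (i, proj_act (A i) t) - c i * F) * p i j)"
  proof -
    have pw: "\<And>i. (g (i, proj_act (A i) t) - c i * F) * p i j = g (i, proj_act (A i) t) * p i j - (c i * p i j) * F"
      by (simp add: algebra_simps)
    have "(\<Sum>i\<in>{1..k}. (g (i, proj_act (A i) t) - c i * F) * p i j)
        = (\<Sum>i\<in>{1..k}. g (i, proj_act (A i) t) * p i j) - (\<Sum>i\<in>{1..k}. (c i * p i j) * F)"
      unfolding pw by (rule sum_subtractf)
    also have "(\<Sum>i\<in>{1..k}. (c i * p i j) * F) = (\<Sum>i\<in>{1..k}. c i * p i j) * F"
      by (rule sum_distrib_right[symmetric])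
    finally show ?thesis by (simp add: Q_app)
  qed
  have e1: "(1 - (\<Sum>i\<in>{1..k}. c i * p i j)) * m = (\<Sum>i\<in>{1..k}. ((1 - c i) * m) * p i j)"
    using psum[OF assms(2)]
    by (simp add: sum_distrib_right sum_subtractf algebra_simps sum_distrib_left[symmetric])
  have e2: "(1 - (\<Sum>i\<in>{1..k}. c i * p i j)) * M = (\<Sum>i\<in>{1..k}. ((1 - c i) * M) * p i j)"
    using psum[OF assms(2)]
    by (simp add: sum_distrib_right sum_subtractf algebra_simps sum_distrib_left[symmetric])
  have "(\<Sum>i\<in>{1..k}. ((1 - c i) * m) * p i j) \<le> (\<Sum>i\<in>{1..k}. (g (i, proj_act (A i) t) - c i * F) * p i j)"
    using assms(1,3) pnn assms(2) by (intro sum_mono mult_right_mono) auto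
  moreover have "(\<Sum>i\<in>{1..k}. (g (i, proj_act (A i) t) - c i * F) * p i j) \<le> (\<Sum>i\<in>{1..k}. ((1 - c i) * M) * p i j)"
    using assms(1,3) pnn assms(2) by (intro sum_mono mult_right_mono) auto
  ultimately show ?thesis unfolding eq e1 e2 by simp
qed

lemma minor:
  assumes s: "s \<in> {1..k}" "rank (A s) = 1"
    and f: "\<forall>x\<in>S. m \<le> f x \<and> f x \<le> M"
  shows "\<forall>j\<in>{1..k}. \<forall>t\<in>P1.
     (1 - mpow k p (Suc n) s j) * m \<le> (Q ^^ Suc n) f (j, t) - mpow k p (Suc n) s j * f (s, proj_act (A s) 0)
   \<and> (Q ^^ Suc n) f (j, t) - mpow k p (Suc n) s j * f (s, proj_act (A s) 0) \<le> (1 - mpow k p (Suc n) s j) * M"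
proof (induction n)
  case 0
  show ?case
  proof (intro ballI)
    fix j t assume jt: "j \<in> {1..k}" "t \<in> P1"
    define c where "c i = (if i = s then 1 else 0 :: real)" for i
    have h: "\<forall>i\<in>{1..k}. \<forall>t\<in>P1. (1 - c i) * m \<le> f (i, proj_act (A i) t) - c i * f (s, proj_act (A s) 0)
              \<and> f (i, proj_act (A i) t) - c i * f (s, proj_act (A s) 0) \<le> (1 - c i) * M"
    proof (intro ballI)
      fix i t assume i: "i \<in> {1..k}" and t: "t \<in> P1"
      show "(1 - c i) * m \<le> f (i, proj_act (A i) t) - c i * f (s, proj_act (A s) 0)
              \<and> f (i, proj_act (A i) t) - c i * f (s, proj_act (A s) 0) \<le> (1 - c i) * M"
      proof (cases "i = s")
        case True
        then have "proj_act (A i) t = proj_act (A s) 0" using proj_act_const[OF s(2)] by blast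
        then show ?thesis using True by (simp add: c_def)
      next
        case False
        then show ?thesis using f act_P1[OF i, of t] i by (simp add: c_def)
      qed
    qed
    have cs: "(\<Sum>i\<in>{1..k}. c i * p i j) = mpow k p (Suc 0) s j"
      using s(1) jt(1) by (simp add: c_def if_distrib if_distribR sum.If_cases cong: if_cong)
    show "(1 - mpow k p (Suc 0) s j) * m \<le> (Q ^^ Suc 0) f (j, t) - mpow k p (Suc 0) s j * f (s, proj_act (A s) 0)
   \<and> (Q ^^ Suc 0) f (j, t) - mpow k p (Suc 0) s j * f (s, proj_act (A s) 0) \<le> (1 - mpow k p (Suc 0) s j) * M"
      using step[OF h jt] unfolding cs by simp
  qed
next
  case (Suc n)
  show ?case
  proof (intro ballI)
    fix j t assume jt: "j \<in> {1..k}" "t \<in> P1"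
    define c where "c i = mpow k p (Suc n) s i" for i
    have h: "\<forall>i\<in>{1..k}. \<forall>t\<in>P1. (1 - c i) * m \<le> (Q ^^ Suc n) f (i, proj_act (A i) t) - c i * f (s, proj_act (A s) 0)
              \<and> (Q ^^ Suc n) f (i, proj_act (A i) t) - c i * f (s, proj_act (A s) 0) \<le> (1 - c i) * M"
      using Suc.IH act_P1 unfolding c_def by blast
    have cs: "(\<Sum>i\<in>{1..k}. c i * p i j) = mpow k p (Suc (Suc n)) s j"
      using mpow_Suc'[OF s(1) jt(1), of p "Suc n"] by (simp add: c_def)
    show "(1 - mpow k p (Suc (Suc n)) s j) * m \<le> (Q ^^ Suc (Suc n)) f (j, t) - mpow k p (Suc (Suc n)) s j * f (s, proj_act (A s) 0)
   \<and> (Q ^^ Suc (Suc n)) f (j, t) - mpow k p (Suc (Suc n)) s j * f (s, proj_act (A s) 0) \<le> (1 - mpow k p (Suc (Suc n)) s j) * M"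
      using step[OF h jt] unfolding cs by simp
  qed
qed

lemma contract:
  assumes s: "s \<in> {1..k}" "rank (A s) = 1"
    and f: "\<forall>x\<in>S. m \<le> f x \<and> f x \<le> m + D"
    and eps: "0 \<le> e" "\<forall>j\<in>{1..k}. e \<le> mpow k p (Suc n) s j"
  shows "\<exists>m'. \<forall>x\<in>S. m' \<le> (Q ^^ Suc n) f x \<and> (Q ^^ Suc n) f x \<le> m' + (1 - e) * D"
proof -
  define F where "F = f (s, proj_act (A s) 0)"
  have FS: "m \<le> F \<and> F \<le> m + D" using f s(1) act_P1[OF s(1)] by (auto simp: F_def)
  show ?thesis
  proof (intro exI[of _ "e * F + (1 - e) * m"] ballI conjI)
    fix x assume x: "x \<in> S"
    then obtain j t where jt: "x = (j, t)" "j \<in> {1..k}" "t \<in> P1" by auto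
    define c where "c = mpow k p (Suc n) s j"
    have ce: "e \<le> c" using eps jt(2) by (simp add: c_def)
    have mn: "(1 - c) * m \<le> (Q ^^ Suc n) f x - c * F \<and> (Q ^^ Suc n) f x - c * F \<le> (1 - c) * (m + D)"
      using minor[OF s f, of n] jt unfolding c_def F_def by auto
    have p1: "(c - e) * m \<le> (c - e) * F" using FS ce by (intro mult_left_mono) auto
    have p2: "(c - e) * F \<le> (c - e) * (m + D)" using FS ce by (intro mult_left_mono) auto
    show "e * F + (1 - e) * m \<le> (Q ^^ Suc n) f x"
      using mn p1 by (simp add: algebra_simps)
    show "(Q ^^ Suc n) f x \<le> e * F + (1 - e) * m + (1 - e) * D"
      using mn p2 by (simp add: algebra_simps)
  qed
qed

end



context QS begin

lemma SP_space: "space (SP k) = S"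
  by (simp add: SP_def space_pair_measure space_restrict_space)

lemma Q_meas:
  assumes "f \<in> borel_measurable (SP k)"
  shows "Q f \<in> borel_measurable (SP k)"
proof -
  have eq: "Q f = (\<lambda>x. \<Sum>i\<in>{1..k}. f (i, proj_act (A i) (snd x)) * p i (fst x))"
    by (auto simp: fun_eq_iff Qop_def)
  have "(\<lambda>x. \<Sum>i\<in>{1..k}. f (i, proj_act (A i) (snd x)) * p i (fst x)) \<in> borel_measurable (SP k)"
  proof (rule borel_measurable_sum)
    fix i assume i: "i \<in> {1..k}"
    have pm: "proj_act (A i) \<in> measurable (restrict_space borel P1) (restrict_space borel P1)"
      using i ranks by (intro proj_act_meas) auto
    have mp: "(\<lambda>x. (i, proj_act (A i) (snd x))) \<in> measurable (SP k) (SP k)"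
      unfolding SP_def
      by (intro measurable_Pair measurable_const measurable_compose[OF measurable_snd pm]) (use i in auto)
    have m1: "(\<lambda>x. f (i, proj_act (A i) (snd x))) \<in> borel_measurable (SP k)"
      using measurable_compose[OF mp assms] .
    have m2: "(\<lambda>x. p i (fst x)) \<in> borel_measurable (SP k)"
      unfolding SP_def by (rule measurable_compose[OF measurable_fst]) simp
    show "(\<lambda>x. f (i, proj_act (A i) (snd x)) * p i (fst x)) \<in> borel_measurable (SP k)"
      using m1 m2 by (rule borel_measurable_times)
  qed
  then show ?thesis using eq by simp
qed

lemma Linf_bound: "f \<in> Linf k \<Longrightarrow> \<exists>B. \<forall>x\<in>S. \<bar>f x\<bar> \<le> B"
  unfolding Linf_def using bounded_iff[of "f ` S"] by auto

lemma Linf_Q: assumes "f \<in> Linf k" shows "Q f \<in> Linf k"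
proof -
  obtain B where B: "\<forall>x\<in>S. \<bar>f x\<bar> \<le> B" using Linf_bound[OF assms] by blast
  then have "\<forall>x\<in>S. -B \<le> f x \<and> f x \<le> B" using abs_bounds by blast
  then have "\<forall>x\<in>S. -B \<le> Q f x \<and> Q f x \<le> B" using Q_range by blast
  then have "\<forall>x\<in>S. \<bar>Q f x\<bar> \<le> B" using abs_bounds2 by blast
  then have "bounded (Q f ` S)" unfolding bounded_iff by (intro exI[of _ B]) auto
  moreover have "Q f \<in> borel_measurable (SP k)" using assms Q_meas by (simp add: Linf_def)
  ultimately show ?thesis by (simp add: Linf_def)
qed

lemma Linf_Qpow: "f \<in> Linf k \<Longrightarrow> (Q ^^ n) f \<in> Linf k"
  by (induction n) (auto intro: Linf_Q)

lemma stat_iter: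
  assumes "Q_stationary k A p \<eta>" "f \<in> Linf k"
  shows "(\<integral>x. (Q ^^ n) f x \<partial>\<eta>) = (\<integral>x. f x \<partial>\<eta>)"
proof (induction n)
  case 0 then show ?case by simp
next
  case (Suc n)
  have "(\<integral>x. (Q ^^ Suc n) f x \<partial>\<eta>) = (\<integral>x. Q ((Q ^^ n) f) x \<partial>\<eta>)" by simp
  also have "\<dots> = (\<integral>x. (Q ^^ n) f x \<partial>\<eta>)"
    using assms(1) Linf_Qpow[OF assms(2), of n] by (simp add: Q_stationary_def)
  finally show ?case using Suc.IH by simp
qed

lemma integral_bounds:
  assumes st: "Q_stationary k A p \<eta>" and g: "g \<in> Linf k" and ab: "\<forall>x\<in>S. a \<le> g x \<and> g x \<le> b"
  shows "a \<le> (\<integral>x. g x \<partial>\<eta>) \<and> (\<integral>x. g x \<partial>\<eta>) \<le> b"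
proof -
  have ps: "prob_space \<eta>" using st unfolding Q_stationary_def by (rule conjunct1)
  have se: "sets \<eta> = sets (SP k)" using st unfolding Q_stationary_def by (rule conjunct1[OF conjunct2])
  interpret prob_space \<eta> by (rule ps)
  have sp: "space \<eta> = S" using sets_eq_imp_space_eq[OF se] SP_space by simp
  have gSP: "g \<in> borel_measurable (SP k)" using g by (simp add: Linf_def)
  have gm: "g \<in> borel_measurable \<eta>"
    by (subst measurable_cong_sets[OF se refl]) (rule gSP)
  have ig: "integrable \<eta> g"
  proof (rule integrable_const_bound[where B = "max \<bar>a\<bar> \<bar>b\<bar>"])
    show "AE x in \<eta>. norm (g x) \<le> max \<bar>a\<bar> \<bar>b\<bar>"
      by (rule AE_I2) (use ab sp in force)
  qed (rule gm)
  have "(\<integral>x. a \<partial>\<eta>) \<le> (\<integral>x. g x \<partial>\<eta>)"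
    by (rule integral_mono[OF _ ig]) (use ab sp in auto)
  moreover have "(\<integral>x. g x \<partial>\<eta>) \<le> (\<integral>x. b \<partial>\<eta>)"
    by (rule integral_mono[OF ig]) (use ab sp in auto)
  ultimately show ?thesis by (simp add: prob_space)
qed

end



theorem theorem2p1:
  fixes k :: nat and A :: "nat \<Rightarrow> real^2^2" and p :: "nat \<Rightarrow> nat \<Rightarrow> real"
  assumes ranks: "\<forall>i\<in>{1..k}. rank (A i) = 1 \<or> rank (A i) = 2"
    and sing: "\<exists>i\<in>{1..k}. rank (A i) = 1"
    and inv: "\<exists>i\<in>{1..k}. rank (A i) = 2"
    and stoch: "left_stochastic k p"
    and prim: "primitive k p"
  shows "\<exists>C a. a > 0 \<and>
    (\<forall>\<eta>. Q_stationary k A p \<eta> \<longrightarrow>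
      (\<forall>n::nat. \<forall>\<phi>\<in>Linf k.
         supnorm k (\<lambda>x. (Qop k A p ^^ n) \<phi> x - (\<integral>y. \<phi> y \<partial>\<eta>))
           \<le> C * exp (- a * real n) * supnorm k \<phi>))"
proof -
  interpret QS k A p using ranks stoch by unfold_locales
  obtain s where s: "s \<in> {1..k}" "rank (A s) = 1" using sing by blast
  obtain i0 where i0: "i0 \<in> {1..k}" "rank (A i0) = 2" using inv by blast
  have si0: "s \<noteq> i0" using s i0 by auto
  obtain N where Npos: "\<forall>i\<in>{1..k}. \<forall>j\<in>{1..k}. mpow k p N i j > 0"
    using prim by (auto simp: primitive_def)
  have "N \<noteq> 0"
  proof
    assume "N = 0"
    then have "mpow k p N s i0 = 0" using si0 by simp
    moreover have "mpow k p N s i0 > 0" using Npos s(1) i0(1) by blast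
    ultimately show False by simp
  qed
  then obtain N' where N': "N = Suc N'" using not0_implies_Suc by blast
  define e0 where "e0 = Min ((\<lambda>j. mpow k p N s j) ` {1..k})"
  have ne: "{1..k} \<noteq> {}" using s by auto
  have e0pos: "e0 > 0" unfolding e0_def using Npos s ne by (subst Min_gr_iff) auto
  have e0le: "\<forall>j\<in>{1..k}. e0 \<le> mpow k p N s j" unfolding e0_def by auto
  define e where "e = min e0 (1/2)"
  define \<beta> where "\<beta> = 1 - e"
  have epos: "0 < e" "e \<le> 1/2" using e0pos by (auto simp: e_def)
  have ele: "\<forall>j\<in>{1..k}. e \<le> mpow k p (Suc N') s j" using e0le N' by (auto simp: e_def)
  have bb: "1/2 \<le> \<beta>" "\<beta> < 1" "0 < \<beta>" using epos by (auto simp: \<beta>_def)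
  have iter: "\<And>f m D. D \<ge> 0 \<Longrightarrow> \<forall>x\<in>S. m \<le> f x \<and> f x \<le> m + D \<Longrightarrow>
      \<exists>m'. \<forall>x\<in>S. m' \<le> (Q ^^ (q * N)) f x \<and> (Q ^^ (q * N)) f x \<le> m' + \<beta> ^ q * D" for q
  proof (induction q)
    case 0 then show ?case by auto
  next
    case (Suc q)
    obtain m' where m': "\<forall>x\<in>S. m' \<le> (Q ^^ (q * N)) f x \<and> (Q ^^ (q * N)) f x \<le> m' + \<beta> ^ q * D"
      using Suc.IH[OF Suc.prems] by blast
    have "\<beta> ^ q * D \<ge> 0" using Suc.prems bb by simp
    obtain m'' where m'': "\<forall>x\<in>S. m'' \<le> (Q ^^ Suc N') ((Q ^^ (q * N)) f) x
        \<and> (Q ^^ Suc N') ((Q ^^ (q * N)) f) x \<le> m'' + (1 - e) * (\<beta> ^ q * D)"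
      using contract[OF s m' less_imp_le[OF epos(1)] ele] by blast
    have eq: "(Q ^^ (Suc q * N)) f = (Q ^^ Suc N') ((Q ^^ (q * N)) f)"
    proof -
      have "Suc q * N = Suc N' + q * N" by (simp add: N')
      then show ?thesis by (simp only: funpow_add o_apply)
    qed
    show ?case using m'' unfolding eq by (intro exI[of _ m'']) (simp add: \<beta>_def mult.assoc)
  qed
  define a where "a = - ln \<beta> / real N"
  define C where "C = 2 / \<beta>"
  have lnb: "ln \<beta> < 0" using bb by simp
  have Nr: "real N > 0" using N' by simp
  have "ln \<beta> / real N < 0" by (rule divide_neg_pos[OF lnb Nr])
  then have apos: "a > 0" unfolding a_def by simp
  show ?thesis
  proof (intro exI conjI allI impI ballI)
    show "a > 0" by (rule apos)
    fix \<eta> n \<phi> assume st: "Q_stationary k A p \<eta>" and phi: "\<phi> \<in> Linf k"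
    obtain B0 where B0: "\<forall>x\<in>S. \<bar>\<phi> x\<bar> \<le> B0" using Linf_bound[OF phi] by blast
    define B where "B = supnorm k \<phi>"
    have bdd: "bdd_above ((\<lambda>x. \<bar>\<phi> x\<bar>) ` S)" by (rule bdd_aboveI[where M=B0]) (use B0 in auto)
    have phB: "\<forall>x\<in>S. \<bar>\<phi> x\<bar> \<le> B" unfolding B_def supnorm_def using bdd by (auto intro: cSUP_upper)
    have x0: "(s, 0) \<in> S" using s by (simp add: P1_def)
    have "\<bar>\<phi> (s, 0)\<bar> \<le> B" using phB x0 by blast
    then have Bnn: "B \<ge> 0" by (meson abs_ge_zero order_trans)
    have r0: "\<forall>x\<in>S. -B \<le> \<phi> x \<and> \<phi> x \<le> -B + 2 * B"
    proof
      fix x assume "x \<in> S"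
      then have "\<bar>\<phi> x\<bar> \<le> B" using phB by blast
      then show "-B \<le> \<phi> x \<and> \<phi> x \<le> -B + 2 * B" by arith
    qed
    have B2: "0 \<le> 2 * B" using Bnn by simp
    define q where "q = n div N"
    define r where "r = n mod N"
    have nqr: "n = r + q * N" by (simp add: q_def r_def)
    obtain m' where m': "\<forall>x\<in>S. m' \<le> (Q ^^ (q * N)) \<phi> x \<and> (Q ^^ (q * N)) \<phi> x \<le> m' + \<beta> ^ q * (2 * B)"
      using iter[OF B2 r0] by blast
    have gq: "(Q ^^ n) \<phi> = (Q ^^ r) ((Q ^^ (q * N)) \<phi>)" by (simp add: nqr funpow_add)
    have rg: "\<forall>x\<in>S. m' \<le> (Q ^^ n) \<phi> x \<and> (Q ^^ n) \<phi> x \<le> m' + \<beta> ^ q * (2 * B)"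
      unfolding gq by (rule Qpow_range[OF m'])
    have ib: "m' \<le> (\<integral>y. \<phi> y \<partial>\<eta>) \<and> (\<integral>y. \<phi> y \<partial>\<eta>) \<le> m' + \<beta> ^ q * (2 * B)"
      using integral_bounds[OF st Linf_Qpow[OF phi, of n] rg] stat_iter[OF st phi, of n] by simp
    have sup1: "supnorm k (\<lambda>x. (Q ^^ n) \<phi> x - (\<integral>y. \<phi> y \<partial>\<eta>)) \<le> \<beta> ^ q * (2 * B)"
      unfolding supnorm_def
    proof (rule cSUP_least)
      show "S \<noteq> {}" using x0 by blast
      fix x assume "x \<in> S"
      then show "\<bar>(Q ^^ n) \<phi> x - (\<integral>y. \<phi> y \<partial>\<eta>)\<bar> \<le> \<beta> ^ q * (2 * B)"
        using rg ib abs_diff_bound \<open>x \<in> S\<close> by blast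
    qed
    have qn: "real n / real N \<le> real (Suc q)"
    proof -
      have rN: "r < N" unfolding r_def using N' by simp
      have "r + q * N < N + q * N" using rN by simp
      then have "n < Suc q * N" using nqr by simp
      then have "real n < real (Suc q) * real N" by (metis of_nat_less_iff of_nat_mult)
      then show ?thesis using Nr by (simp add: divide_less_eq less_imp_le)
    qed
    have "real (Suc q) * ln \<beta> \<le> (real n / real N) * ln \<beta>"
      using qn lnb by (intro mult_right_mono_neg) auto
    then have e1: "exp (real (Suc q) * ln \<beta>) \<le> exp ((real n / real N) * ln \<beta>)" by simp
    have e2: "exp (real (Suc q) * ln \<beta>) = \<beta> ^ Suc q"
    proof -
      have "exp (real (Suc q) * ln \<beta>) = exp (ln \<beta>) ^ Suc q" by (rule exp_of_nat_mult)
      also have "exp (ln \<beta>) = \<beta>" using bb(3) by (rule exp_ln)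
      finally show ?thesis .
    qed
    have e3: "(real n / real N) * ln \<beta> = - a * real n" unfolding a_def by simp
    have "\<beta> ^ Suc q \<le> exp (- a * real n)" using e1 unfolding e2 e3 .
    then have bq: "\<beta> * \<beta> ^ q \<le> exp (- a * real n)" by simp
    have "\<beta> ^ q \<le> exp (- a * real n) / \<beta>" using bq bb by (simp add: le_divide_eq mult.commute)
    then have "\<beta> ^ q * (2 * B) \<le> (exp (- a * real n) / \<beta>) * (2 * B)"
      using Bnn by (intro mult_right_mono) auto
    also have "\<dots> = C * exp (- a * real n) * B" by (simp add: C_def)
    finally show "supnorm k (\<lambda>x. (Qop k A p ^^ n) \<phi> x - (\<integral>y. \<phi> y \<partial>\<eta>))
           \<le> C * exp (- a * real n) * supnorm k \<phi>"
      using sup1 unfolding B_def by simp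
  qed
qed


end
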